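(* Let $H$ be a non-abelian finite $p$-group with cyclic centre (so $H$ is monolithic), and let $C$ be a finite $p$-group of order $n$. Let $W=H\wr C$ be the regular wreath product with base group $B=H^n$, let $Z=Z(H)^n$ and $F=\{(x_1,\dots,x_n)\in Z: x_1x_2\cdots x_n=1\}$ (a normal subgroup of $W$). Then the wreath-central product $J=W/F$ satisfies $Z(J)\cong Z(H)$; hence $J$ is monolithic.
   Context: A group is monolithic if the intersection of all its nontrivial normal subgroups is nontrivial. *)

theory Defs
  imports "HOL-Algebra.Algebra"
begin

definition center :: "('a, 'b) monoid_scheme \<Rightarrow> 'a set" where
  "center G = {z \<in> carrier G. \<forall>g \<in> carrier G. z \<otimes>\<^bsub>G\<^esub> g = g \<otimes>\<^bsub>G\<^esub> z}"

definition center_group :: "('a, 'b) monoid_scheme \<Rightarrow> ('a, 'b) monoid_scheme" where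
  "center_group G = G\<lparr>carrier := center G\<rparr>"

definition p_group :: "nat \<Rightarrow> ('a, 'b) monoid_scheme \<Rightarrow> bool" where
  "p_group p G \<longleftrightarrow> group G \<and> Factorial_Ring.prime p \<and> finite (carrier G) \<and> (\<exists>k. order G = p ^ k)"

definition monolithic :: "('a, 'b) monoid_scheme \<Rightarrow> bool" where
  "monolithic G \<longleftrightarrow>
     \<Inter> {N. N \<lhd> G \<and> N \<noteq> {\<one>\<^bsub>G\<^esub>}} \<noteq> {\<one>\<^bsub>G\<^esub>}"

(* regular (right) wreath product H wr C with base group H^{carrier C}:
   elements (f, c) with f : carrier C \<rightarrow> carrier H (extensional), c \<in> carrier C;
   (f, c)(g, d) = (\<lambda>x. f x \<cdot> g (x c), c d). *)
definition wreath :: "('a, 'b) monoid_scheme \<Rightarrow> ('c, 'd) monoid_scheme \<Rightarrow> (('c \<Rightarrow> 'a) \<times> 'c) monoid" where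
  "wreath H C = \<lparr> carrier = (carrier C \<rightarrow>\<^sub>E carrier H) \<times> carrier C,
     monoid.mult = (\<lambda>(f, c) (g, d). ((\<lambda>x\<in>carrier C. f x \<otimes>\<^bsub>H\<^esub> g (x \<otimes>\<^bsub>C\<^esub> c)), c \<otimes>\<^bsub>C\<^esub> d)),
     one = ((\<lambda>x\<in>carrier C. \<one>\<^bsub>H\<^esub>), \<one>\<^bsub>C\<^esub>) \<rparr>"

definition wreath_F :: "('a, 'b) monoid_scheme \<Rightarrow> ('c, 'd) monoid_scheme \<Rightarrow> (('c \<Rightarrow> 'a) \<times> 'c) set" where
  "wreath_F H C = {(f, \<one>\<^bsub>C\<^esub>) | f. f \<in> carrier C \<rightarrow>\<^sub>E center H \<and>
                     finprod (center_group H) f (carrier C) = \<one>\<^bsub>H\<^esub>}"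

end

theory Submission
  imports Defs
begin


lemma ppow_ne1_dvd:
  fixes p :: nat assumes "Factorial_Ring.prime p" "d dvd p ^ k" "d \<noteq> 1" shows "p dvd d"
proof -
  obtain i where "d = p ^ i" using assms divides_primepow_nat by blast
  with assms(3) have "i \<noteq> 0" by auto
  thus ?thesis using \<open>d = p ^ i\<close> by (simp add: dvd_power)
qed

lemma (in group) pgroup_normal_center:
  assumes fin: "finite (carrier G)" and p: "Factorial_Ring.prime p" and ord: "order G = p ^ k"
    and N: "N \<lhd> G" and Nn: "N \<noteq> {\<one>}"
  shows "\<exists>x\<in>N. x \<in> center G \<and> x \<noteq> \<one>"
proof -
  define \<phi> where "\<phi> = (\<lambda>g. (\<lambda>h \<in> carrier G. g \<otimes> h \<otimes> (inv g)))"
  interpret A: group_action G "carrier G" \<phi>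
    unfolding \<phi>_def by (rule action_by_conjugation)
  have NS: "subgroup N G" using N normal_imp_subgroup by blast
  have Nsub: "N \<subseteq> carrier G" using NS subgroup.subset by blast
  have finN: "finite N" using Nsub fin finite_subset by blast
  define S where "S = N - center G"
  have orb: "orbit G \<phi> x = {g \<otimes> x \<otimes> inv g | g. g \<in> carrier G}" if "x \<in> carrier G" for x
    using that unfolding orbit_def \<phi>_def by auto
  have orbS: "orbit G \<phi> x \<subseteq> S" if xS: "x \<in> S" for x
  proof
    fix y assume "y \<in> orbit G \<phi> x"
    then obtain g where g: "g \<in> carrier G" "y = g \<otimes> x \<otimes> inv g"
      using \<open>y \<in> orbit G \<phi> x\<close> orb[of x] xS S_def Nsub by blast
    have xN: "x \<in> N" and xc: "x \<notin> center G" using xS S_def by auto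
    have "y \<in> N" using g xN N by (simp add: normal.inv_op_closed2)
    moreover have "y \<notin> center G"
    proof
      assume yc: "y \<in> center G"
      have xG: "x \<in> carrier G" using xN Nsub by auto
      have "inv g \<otimes> y \<otimes> g = (inv g \<otimes> g) \<otimes> x \<otimes> (inv g \<otimes> g)" using g xG by (simp only: m_assoc inv_closed m_closed)
      hence "x = inv g \<otimes> y \<otimes> g" using g xG by (simp only: l_inv l_one r_one inv_closed m_closed)
      also have "\<dots> = inv g \<otimes> (g \<otimes> y)"
      proof -
        have yG: "y \<in> carrier G" and yg: "y \<otimes> g = g \<otimes> y" using yc g unfolding center_def by auto
        have "inv g \<otimes> y \<otimes> g = inv g \<otimes> (y \<otimes> g)" using yG g by (simp only: m_assoc inv_closed)
        thus ?thesis using yg by simp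
      qed
      also have "\<dots> = y" using g yc unfolding center_def by (simp add: m_assoc[symmetric])
      finally show False using yc xc by simp
    qed
    ultimately show "y \<in> S" using S_def by auto
  qed
  have orbdvd: "p dvd card (orbit G \<phi> x)" if "x \<in> S" for x
  proof -
    have xG: "x \<in> carrier G" using that S_def Nsub by auto
    have "card (orbit G \<phi> x) dvd p ^ k"
      using A.orbit_stabilizer_theorem[OF xG] ord by (metis dvd_triv_left)
    moreover have "card (orbit G \<phi> x) \<noteq> 1"
    proof
      assume c1: "card (orbit G \<phi> x) = 1"
      have "x \<in> center G"
        unfolding center_def
      proof (intro CollectI conjI ballI xG)
        fix g assume g: "g \<in> carrier G"
        have "x = \<one> \<otimes> x \<otimes> inv \<one>" using xG by simp
        hence "x \<in> orbit G \<phi> x" using orb[OF xG] one_closed by blast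
        moreover have "g \<otimes> x \<otimes> inv g \<in> orbit G \<phi> x" using orb[OF xG] g by blast
        ultimately have e: "g \<otimes> x \<otimes> inv g = x" using c1 by (metis card_1_singletonE singletonD)
        have "x \<otimes> g = g \<otimes> x \<otimes> inv g \<otimes> g" using e by simp
        also have "\<dots> = g \<otimes> x" using g xG by (metis inv_closed l_inv m_assoc m_closed r_one)
        finally show "x \<otimes> g = g \<otimes> x" .
      qed
      thus False using that S_def by auto
    qed
    ultimately show ?thesis using ppow_ne1_dvd p by blast
  qed
  have Sun: "S = \<Union> ((\<lambda>x. orbit G \<phi> x) ` S)"
  proof
    show "S \<subseteq> \<Union> ((\<lambda>x. orbit G \<phi> x) ` S)"
    proof
      fix x assume "x \<in> S"
      then have "x \<in> orbit G \<phi> x" using A.orbit_refl S_def Nsub by blast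
      thus "x \<in> \<Union> ((\<lambda>x. orbit G \<phi> x) ` S)" using \<open>x \<in> S\<close> by blast
    qed
  qed (use orbS in blast)
  have disj: "pairwise disjnt ((\<lambda>x. orbit G \<phi> x) ` S)"
    unfolding pairwise_def disjnt_def
  proof (intro ballI impI)
    fix O1 O2 assume "O1 \<in> (\<lambda>x. orbit G \<phi> x) ` S" "O2 \<in> (\<lambda>x. orbit G \<phi> x) ` S" "O1 \<noteq> O2"
    moreover have "O1 \<in> orbits G (carrier G) \<phi>" "O2 \<in> orbits G (carrier G) \<phi>"
      using calculation S_def Nsub unfolding orbits_def by auto
    ultimately show "O1 \<inter> O2 = {}" using A.disjoint_union by blast
  qed
  have finS: "finite S" using finN S_def by auto
  have "card S = sum card ((\<lambda>x. orbit G \<phi> x) ` S)"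
  proof (subst Sun, rule card_Union_disjoint[OF disj])
    fix A assume "A \<in> (\<lambda>x. orbit G \<phi> x) ` S"
    then obtain x where "x \<in> S" "A = orbit G \<phi> x" by blast
    then have "A \<subseteq> S" using orbS by blast
    then show "finite A" using finS by (rule finite_subset)
  qed
  hence pS: "p dvd card S" by (auto intro!: dvd_sum orbdvd)
  have "card N dvd p ^ k" using lagrange[OF NS] ord by (metis dvd_triv_right)
  moreover have "card N \<noteq> 1"
  proof
    assume "card N = 1"
    moreover have "\<one> \<in> N" using NS subgroup.one_closed by blast
    ultimately have "N = {\<one>}" by (metis card_1_singletonE singletonD)
    thus False using Nn by simp
  qed
  ultimately have pN: "p dvd card N" using ppow_ne1_dvd p by blast
  have "N = S \<union> (N \<inter> center G)" "S \<inter> (N \<inter> center G) = {}" using S_def by auto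
  hence "card N = card S + card (N \<inter> center G)" using finN finS card_Un_disjoint[of S "N \<inter> center G"] by simp
  hence pI: "p dvd card (N \<inter> center G)" using pS pN by (simp add: dvd_add_right_iff)
  have one: "\<one> \<in> N \<inter> center G" using NS subgroup.one_closed unfolding center_def by auto
  hence "card (N \<inter> center G) \<noteq> 0" using finN by auto
  hence "card (N \<inter> center G) \<ge> p" using pI by (simp add: dvd_imp_le)
  hence "card (N \<inter> center G) \<ge> 2" using p prime_ge_2_nat[of p] by linarith
  hence "N \<inter> center G \<noteq> {\<one>}" by auto
  thus ?thesis using one by blast
qed



lemma (in group) center_sub: "center G \<subseteq> carrier G"
  unfolding center_def by auto

lemma (in group) center_mult: "a \<in> center G \<Longrightarrow> b \<in> center G \<Longrightarrow> a \<otimes> b \<in> center G"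
proof -
  assume a: "a \<in> center G" and b: "b \<in> center G"
  have aG: "a \<in> carrier G" and bG: "b \<in> carrier G" using a b center_sub by auto
  show ?thesis unfolding center_def
  proof (intro CollectI conjI ballI)
    show "a \<otimes> b \<in> carrier G" using aG bG by simp
    fix g assume g: "g \<in> carrier G"
    have ag: "a \<otimes> g = g \<otimes> a" using a g unfolding center_def by auto
    have bg: "b \<otimes> g = g \<otimes> b" using b g unfolding center_def by auto
    have "a \<otimes> b \<otimes> g = a \<otimes> (b \<otimes> g)" using aG bG g by (rule m_assoc)
    also have "\<dots> = a \<otimes> (g \<otimes> b)" using bg by simp
    also have "\<dots> = a \<otimes> g \<otimes> b" using aG g bG by (rule m_assoc[symmetric])
    also have "\<dots> = g \<otimes> a \<otimes> b" using ag by simp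
    also have "\<dots> = g \<otimes> (a \<otimes> b)" using g aG bG by (rule m_assoc)
    finally show "a \<otimes> b \<otimes> g = g \<otimes> (a \<otimes> b)" .
  qed
qed

lemma (in group) center_inv: "a \<in> center G \<Longrightarrow> inv a \<in> center G"
proof -
  assume a: "a \<in> center G"
  have aG: "a \<in> carrier G" using a center_sub by auto
  show ?thesis unfolding center_def
  proof (intro CollectI conjI ballI)
    show "inv a \<in> carrier G" using aG by simp
    fix g assume g: "g \<in> carrier G"
    have ag: "a \<otimes> g = g \<otimes> a" using a g unfolding center_def by auto
    have "inv a \<otimes> (a \<otimes> g) \<otimes> inv a = inv a \<otimes> (g \<otimes> a) \<otimes> inv a" using ag by simp
    moreover have "inv a \<otimes> (a \<otimes> g) \<otimes> inv a = g \<otimes> inv a" using aG g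
      by (simp only: m_assoc[symmetric] l_inv l_one inv_closed m_closed)
    moreover have "inv a \<otimes> (g \<otimes> a) \<otimes> inv a = inv a \<otimes> g" using aG g
      by (simp only: m_assoc r_inv r_one inv_closed m_closed)
    ultimately show "inv a \<otimes> g = g \<otimes> inv a" by simp
  qed
qed

lemma (in group) center_one: "\<one> \<in> center G"
  unfolding center_def by auto

lemma (in group) center_comm: "a \<in> center G \<Longrightarrow> g \<in> carrier G \<Longrightarrow> a \<otimes> g = g \<otimes> a"
  unfolding center_def by auto

lemma (in group) center_group_comm: "comm_group (center_group G)"
proof (rule comm_groupI)
  fix x y z
  show "x \<in> carrier (center_group G) \<Longrightarrow> y \<in> carrier (center_group G) \<Longrightarrow> x \<otimes>\<^bsub>center_group G\<^esub> y \<in> carrier (center_group G)"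
    by (simp add: center_group_def center_mult)
  show "\<one>\<^bsub>center_group G\<^esub> \<in> carrier (center_group G)" by (simp add: center_group_def center_one)
  show "x \<in> carrier (center_group G) \<Longrightarrow> y \<in> carrier (center_group G) \<Longrightarrow> z \<in> carrier (center_group G) \<Longrightarrow>
    x \<otimes>\<^bsub>center_group G\<^esub> y \<otimes>\<^bsub>center_group G\<^esub> z = x \<otimes>\<^bsub>center_group G\<^esub> (y \<otimes>\<^bsub>center_group G\<^esub> z)"
    by (simp add: center_group_def m_assoc subsetD[OF center_sub])
  show "x \<in> carrier (center_group G) \<Longrightarrow> y \<in> carrier (center_group G) \<Longrightarrow> x \<otimes>\<^bsub>center_group G\<^esub> y = y \<otimes>\<^bsub>center_group G\<^esub> x"
    using center_sub by (auto simp: center_group_def center_comm)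
  show "x \<in> carrier (center_group G) \<Longrightarrow> \<one>\<^bsub>center_group G\<^esub> \<otimes>\<^bsub>center_group G\<^esub> x = x"
    using center_sub by (auto simp: center_group_def)
  show "x \<in> carrier (center_group G) \<Longrightarrow> \<exists>y\<in>carrier (center_group G). y \<otimes>\<^bsub>center_group G\<^esub> x = \<one>\<^bsub>center_group G\<^esub>"
    using center_sub center_inv by (auto simp: center_group_def intro!: bexI[of _ "inv x"])
qed

locale wr = H: group H + C: group C
  for H :: "('a, 'b) monoid_scheme" and C :: "('c, 'd) monoid_scheme" +
  assumes finC: "finite (carrier C)"
begin

abbreviation "W \<equiv> wreath H C"
abbreviation "Z \<equiv> center_group H"

lemma carrier_W: "carrier W = (carrier C \<rightarrow>\<^sub>E carrier H) \<times> carrier C"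
  by (simp add: wreath_def)

lemma one_W: "\<one>\<^bsub>W\<^esub> = ((\<lambda>x\<in>carrier C. \<one>\<^bsub>H\<^esub>), \<one>\<^bsub>C\<^esub>)"
  by (simp add: wreath_def)

lemma mult_W: "(f, c) \<otimes>\<^bsub>W\<^esub> (g, d) = ((\<lambda>x\<in>carrier C. f x \<otimes>\<^bsub>H\<^esub> g (x \<otimes>\<^bsub>C\<^esub> c)), c \<otimes>\<^bsub>C\<^esub> d)"
  by (simp add: wreath_def)

lemma W_group: "group W"
proof (rule groupI)
  fix x y z
  assume x: "x \<in> carrier W"
  obtain f c where xfc: "x = (f, c)" by fastforce
  have f: "f \<in> carrier C \<rightarrow>\<^sub>E carrier H" and c: "c \<in> carrier C" using x xfc carrier_W by auto
  show "\<one>\<^bsub>W\<^esub> \<otimes>\<^bsub>W\<^esub> x = x"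
    using f c by (auto simp: xfc one_W mult_W PiE_def extensional_def Pi_def fun_eq_iff)
  show "\<exists>y\<in>carrier W. y \<otimes>\<^bsub>W\<^esub> x = \<one>\<^bsub>W\<^esub>"
  proof (intro bexI)
    show "((\<lambda>u\<in>carrier C. inv\<^bsub>H\<^esub> (f (u \<otimes>\<^bsub>C\<^esub> inv\<^bsub>C\<^esub> c))), inv\<^bsub>C\<^esub> c) \<otimes>\<^bsub>W\<^esub> x = \<one>\<^bsub>W\<^esub>"
      using f c by (auto simp: xfc one_W mult_W PiE_def Pi_def fun_eq_iff C.m_assoc)
    show "((\<lambda>u\<in>carrier C. inv\<^bsub>H\<^esub> (f (u \<otimes>\<^bsub>C\<^esub> inv\<^bsub>C\<^esub> c))), inv\<^bsub>C\<^esub> c) \<in> carrier W"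
      using f c by (auto simp: carrier_W PiE_def Pi_def)
  qed
  assume y: "y \<in> carrier W"
  obtain g d where ygd: "y = (g, d)" by fastforce
  have g: "g \<in> carrier C \<rightarrow>\<^sub>E carrier H" and d: "d \<in> carrier C" using y ygd carrier_W by auto
  show "x \<otimes>\<^bsub>W\<^esub> y \<in> carrier W"
    using f c g d by (auto simp: xfc ygd carrier_W mult_W PiE_def Pi_def)
  assume z: "z \<in> carrier W"
  obtain h e where zhe: "z = (h, e)" by fastforce
  have h: "h \<in> carrier C \<rightarrow>\<^sub>E carrier H" and e: "e \<in> carrier C" using z zhe carrier_W by auto
  show "x \<otimes>\<^bsub>W\<^esub> y \<otimes>\<^bsub>W\<^esub> z = x \<otimes>\<^bsub>W\<^esub> (y \<otimes>\<^bsub>W\<^esub> z)"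
    using f c g d h e by (auto simp: xfc ygd zhe mult_W PiE_def Pi_def fun_eq_iff C.m_assoc H.m_assoc)
next
  show "\<one>\<^bsub>W\<^esub> \<in> carrier W" by (auto simp: one_W carrier_W)
qed


lemma W_inv: assumes "f \<in> carrier C \<rightarrow>\<^sub>E carrier H" "c \<in> carrier C"
  shows "inv\<^bsub>W\<^esub> (f, c) = ((\<lambda>u\<in>carrier C. inv\<^bsub>H\<^esub> (f (u \<otimes>\<^bsub>C\<^esub> inv\<^bsub>C\<^esub> c))), inv\<^bsub>C\<^esub> c)"
proof (rule group.inv_equality[OF W_group])
  show "((\<lambda>u\<in>carrier C. inv\<^bsub>H\<^esub> (f (u \<otimes>\<^bsub>C\<^esub> inv\<^bsub>C\<^esub> c))), inv\<^bsub>C\<^esub> c) \<otimes>\<^bsub>W\<^esub> (f, c) = \<one>\<^bsub>W\<^esub>"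
    using assms by (auto simp: one_W mult_W PiE_def Pi_def fun_eq_iff C.m_assoc)
  show "((\<lambda>u\<in>carrier C. inv\<^bsub>H\<^esub> (f (u \<otimes>\<^bsub>C\<^esub> inv\<^bsub>C\<^esub> c))), inv\<^bsub>C\<^esub> c) \<in> carrier W"
    using assms by (auto simp: carrier_W PiE_def Pi_def)
  show "(f, c) \<in> carrier W" using assms by (simp add: carrier_W)
qed

lemma Zc: "comm_group Z" by (rule H.center_group_comm)

lemma carrier_Z: "carrier Z = center H" by (simp add: center_group_def)
lemma mult_Z: "(\<otimes>\<^bsub>Z\<^esub>) = (\<otimes>\<^bsub>H\<^esub>)" by (simp add: center_group_def)
lemma one_Z: "\<one>\<^bsub>Z\<^esub> = \<one>\<^bsub>H\<^esub>" by (simp add: center_group_def)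

lemma prod_shift: assumes "z \<in> carrier C \<rightarrow> center H" "d \<in> carrier C"
  shows "finprod Z (\<lambda>x. z (x \<otimes>\<^bsub>C\<^esub> d)) (carrier C) = finprod Z z (carrier C)"
proof -
  interpret Z: comm_group Z by (rule Zc)
  have im: "(\<lambda>x. x \<otimes>\<^bsub>C\<^esub> d) ` carrier C = carrier C"
  proof
    show "(\<lambda>x. x \<otimes>\<^bsub>C\<^esub> d) ` carrier C \<subseteq> carrier C" using assms(2) by auto
    show "carrier C \<subseteq> (\<lambda>x. x \<otimes>\<^bsub>C\<^esub> d) ` carrier C"
    proof
      fix y assume y: "y \<in> carrier C"
      have "y = (y \<otimes>\<^bsub>C\<^esub> inv\<^bsub>C\<^esub> d) \<otimes>\<^bsub>C\<^esub> d" using y assms(2) by (simp add: C.m_assoc)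
      thus "y \<in> (\<lambda>x. x \<otimes>\<^bsub>C\<^esub> d) ` carrier C" using y assms(2) by blast
    qed
  qed
  have inj: "inj_on (\<lambda>x. x \<otimes>\<^bsub>C\<^esub> d) (carrier C)"
    using assms(2) by (auto simp: inj_on_def)
  have "finprod Z z ((\<lambda>x. x \<otimes>\<^bsub>C\<^esub> d) ` carrier C) = finprod Z (\<lambda>x. z (x \<otimes>\<^bsub>C\<^esub> d)) (carrier C)"
    by (rule Z.finprod_reindex) (use assms im carrier_Z in auto, rule inj)
  thus ?thesis using im by simp
qed

lemma H_conj_center: "a \<in> center H \<Longrightarrow> g \<in> carrier H \<Longrightarrow> g \<otimes>\<^bsub>H\<^esub> a \<otimes>\<^bsub>H\<^esub> inv\<^bsub>H\<^esub> g = a"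
proof -
  assume a: "a \<in> center H" and g: "g \<in> carrier H"
  have aH: "a \<in> carrier H" using a H.center_sub by auto
  have "g \<otimes>\<^bsub>H\<^esub> a = a \<otimes>\<^bsub>H\<^esub> g" using H.center_comm[OF a g] by simp
  hence "g \<otimes>\<^bsub>H\<^esub> a \<otimes>\<^bsub>H\<^esub> inv\<^bsub>H\<^esub> g = a \<otimes>\<^bsub>H\<^esub> g \<otimes>\<^bsub>H\<^esub> inv\<^bsub>H\<^esub> g" by simp
  also have "\<dots> = a" using aH g by (simp only: H.m_assoc H.r_inv H.r_one H.inv_closed)
  finally show ?thesis .
qed

abbreviation "F \<equiv> wreath_F H C"

lemma F_mem: "(z, c) \<in> F \<longleftrightarrow> c = \<one>\<^bsub>C\<^esub> \<and> z \<in> carrier C \<rightarrow>\<^sub>E center H \<and> finprod Z z (carrier C) = \<one>\<^bsub>H\<^esub>"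
  by (auto simp: wreath_F_def)

lemma F_sub: "F \<subseteq> carrier W"
  using H.center_sub by (auto simp: wreath_F_def carrier_W PiE_def Pi_def)

lemma F_subgroup: "subgroup F W"
proof (rule group.subgroupI[OF W_group F_sub])
  interpret Z: comm_group Z by (rule Zc)
  show "F \<noteq> {}"
  proof -
    have "((\<lambda>x\<in>carrier C. \<one>\<^bsub>H\<^esub>), \<one>\<^bsub>C\<^esub>) \<in> F"
      unfolding F_mem using H.center_one Z.finprod_one_eqI[of "carrier C" "\<lambda>x\<in>carrier C. \<one>\<^bsub>H\<^esub>"]
      by (auto simp: one_Z)
    thus ?thesis by blast
  qed
next
  interpret Z: comm_group Z by (rule Zc)
  fix a assume a: "a \<in> F"
  then obtain z where az: "a = (z, \<one>\<^bsub>C\<^esub>)" and z: "z \<in> carrier C \<rightarrow>\<^sub>E center H"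
    and pz: "finprod Z z (carrier C) = \<one>\<^bsub>H\<^esub>" by (auto simp: wreath_F_def)
  have zH: "z \<in> carrier C \<rightarrow>\<^sub>E carrier H" using z H.center_sub by (auto simp: PiE_def Pi_def)
  have "inv\<^bsub>W\<^esub> a = ((\<lambda>u\<in>carrier C. inv\<^bsub>H\<^esub> (z u)), \<one>\<^bsub>C\<^esub>)"
    using W_inv[OF zH C.one_closed] az by (auto simp: restrict_def fun_eq_iff)
  moreover have "((\<lambda>u\<in>carrier C. inv\<^bsub>H\<^esub> (z u)), \<one>\<^bsub>C\<^esub>) \<in> F"
    unfolding F_mem
  proof (intro conjI)
    show "(\<lambda>u\<in>carrier C. inv\<^bsub>H\<^esub> (z u)) \<in> carrier C \<rightarrow>\<^sub>E center H"
      using z H.center_inv by auto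
    have "\<one>\<^bsub>H\<^esub> = finprod Z (\<lambda>u. (\<lambda>u\<in>carrier C. inv\<^bsub>H\<^esub> (z u)) u \<otimes>\<^bsub>Z\<^esub> z u) (carrier C)"
      using z H.center_sub by (intro Z.finprod_one_eqI[symmetric, unfolded one_Z]) (auto simp: mult_Z subset_iff)
    also have "\<dots> = finprod Z (\<lambda>u\<in>carrier C. inv\<^bsub>H\<^esub> (z u)) (carrier C) \<otimes>\<^bsub>H\<^esub> finprod Z z (carrier C)"
      using z H.center_inv by (subst Z.finprod_multf) (auto simp: carrier_Z mult_Z)
    also have "\<dots> = finprod Z (\<lambda>u\<in>carrier C. inv\<^bsub>H\<^esub> (z u)) (carrier C)"
    proof -
      have "finprod Z (\<lambda>u\<in>carrier C. inv\<^bsub>H\<^esub> (z u)) (carrier C) \<in> center H"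
        using z H.center_inv Z.finprod_closed[of "\<lambda>u\<in>carrier C. inv\<^bsub>H\<^esub> (z u)" "carrier C"]
        by (auto simp: carrier_Z)
      thus ?thesis using pz H.center_sub by auto
    qed
    finally show "finprod Z (\<lambda>u\<in>carrier C. inv\<^bsub>H\<^esub> (z u)) (carrier C) = \<one>\<^bsub>H\<^esub>" by simp
  qed simp
  ultimately show "inv\<^bsub>W\<^esub> a \<in> F" by simp
next
  interpret Z: comm_group Z by (rule Zc)
  fix a b assume a: "a \<in> F" and b: "b \<in> F"
  then obtain z w where az: "a = (z, \<one>\<^bsub>C\<^esub>)" and z: "z \<in> carrier C \<rightarrow>\<^sub>E center H"
    and pz: "finprod Z z (carrier C) = \<one>\<^bsub>H\<^esub>" and bw: "b = (w, \<one>\<^bsub>C\<^esub>)" and w: "w \<in> carrier C \<rightarrow>\<^sub>E center H"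
    and pw: "finprod Z w (carrier C) = \<one>\<^bsub>H\<^esub>" by (auto simp: wreath_F_def)
  have ab: "a \<otimes>\<^bsub>W\<^esub> b = ((\<lambda>x\<in>carrier C. z x \<otimes>\<^bsub>H\<^esub> w x), \<one>\<^bsub>C\<^esub>)"
    by (auto simp: az bw mult_W fun_eq_iff)
  show "a \<otimes>\<^bsub>W\<^esub> b \<in> F" unfolding ab F_mem
  proof (intro conjI)
    show "(\<lambda>x\<in>carrier C. z x \<otimes>\<^bsub>H\<^esub> w x) \<in> carrier C \<rightarrow>\<^sub>E center H"
      using z w H.center_mult by auto
    have "finprod Z (\<lambda>x\<in>carrier C. z x \<otimes>\<^bsub>H\<^esub> w x) (carrier C) = finprod Z (\<lambda>x. z x \<otimes>\<^bsub>Z\<^esub> w x) (carrier C)"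
      using z w H.center_mult by (intro Z.finprod_cong') (auto simp: carrier_Z mult_Z)
    also have "\<dots> = \<one>\<^bsub>H\<^esub>" using z w pz pw by (subst Z.finprod_multf) (auto simp: carrier_Z one_Z mult_Z)
    finally show "finprod Z (\<lambda>x\<in>carrier C. z x \<otimes>\<^bsub>H\<^esub> w x) (carrier C) = \<one>\<^bsub>H\<^esub>" .
  qed simp
qed


lemma F_conj: assumes g: "g \<in> carrier C \<rightarrow>\<^sub>E carrier H" and d: "d \<in> carrier C"
  and z: "z \<in> carrier C \<rightarrow>\<^sub>E center H"
  shows "(g, d) \<otimes>\<^bsub>W\<^esub> (z, \<one>\<^bsub>C\<^esub>) \<otimes>\<^bsub>W\<^esub> inv\<^bsub>W\<^esub> (g, d) = ((\<lambda>x\<in>carrier C. z (x \<otimes>\<^bsub>C\<^esub> d)), \<one>\<^bsub>C\<^esub>)"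
proof -
  have e1: "x \<otimes>\<^bsub>C\<^esub> (d \<otimes>\<^bsub>C\<^esub> \<one>\<^bsub>C\<^esub>) \<otimes>\<^bsub>C\<^esub> inv\<^bsub>C\<^esub> d = x" if "x \<in> carrier C" for x
    using d that by (simp add: C.m_assoc)
  have e2: "g x \<otimes>\<^bsub>H\<^esub> z (x \<otimes>\<^bsub>C\<^esub> d) \<otimes>\<^bsub>H\<^esub> inv\<^bsub>H\<^esub> (g x) = z (x \<otimes>\<^bsub>C\<^esub> d)" if "x \<in> carrier C" for x
    using that d g z by (intro H_conj_center) auto
  have e3: "d \<otimes>\<^bsub>C\<^esub> \<one>\<^bsub>C\<^esub> \<otimes>\<^bsub>C\<^esub> inv\<^bsub>C\<^esub> d = \<one>\<^bsub>C\<^esub>" using d by simp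
  show ?thesis
    using e1 e2 e3 d by (auto simp: W_inv[OF g d] mult_W fun_eq_iff)
qed

lemma F_normal: "F \<lhd> W"
proof -
  interpret W: group W by (rule W_group)
  show ?thesis unfolding W.normal_inv_iff
  proof (intro conjI ballI F_subgroup)
    fix x h assume x: "x \<in> carrier W" and h: "h \<in> F"
    obtain g d where xgd: "x = (g, d)" by fastforce
    have g: "g \<in> carrier C \<rightarrow>\<^sub>E carrier H" and d: "d \<in> carrier C" using x xgd carrier_W by auto
    obtain z where hz: "h = (z, \<one>\<^bsub>C\<^esub>)" and z: "z \<in> carrier C \<rightarrow>\<^sub>E center H"
      and pz: "finprod Z z (carrier C) = \<one>\<^bsub>H\<^esub>" using h by (auto simp: wreath_F_def)
    interpret Z: comm_group Z by (rule Zc)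
    have "finprod Z (\<lambda>x\<in>carrier C. z (x \<otimes>\<^bsub>C\<^esub> d)) (carrier C) = finprod Z (\<lambda>x. z (x \<otimes>\<^bsub>C\<^esub> d)) (carrier C)"
      using z d by (intro Z.finprod_cong') (auto simp: carrier_Z)
    also have "\<dots> = \<one>\<^bsub>H\<^esub>" using prod_shift[of z d] z d pz by auto
    finally have "((\<lambda>x\<in>carrier C. z (x \<otimes>\<^bsub>C\<^esub> d)), \<one>\<^bsub>C\<^esub>) \<in> F"
      unfolding F_mem using z d by auto
    thus "x \<otimes>\<^bsub>W\<^esub> h \<otimes>\<^bsub>W\<^esub> inv\<^bsub>W\<^esub> x \<in> F" using F_conj[OF g d z] xgd hz by simp
  qed
qed

end


context wr begin

definition delta where "delta a = (\<lambda>x\<in>carrier C. if x = \<one>\<^bsub>C\<^esub> then a else \<one>\<^bsub>H\<^esub>)"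
definition phi where "phi a = F #>\<^bsub>W\<^esub> (delta a, \<one>\<^bsub>C\<^esub>)"

lemma prod_mult: assumes "z \<in> carrier C \<rightarrow> center H" "w \<in> carrier C \<rightarrow> center H"
  shows "finprod Z (\<lambda>x\<in>carrier C. z x \<otimes>\<^bsub>H\<^esub> w x) (carrier C) = finprod Z z (carrier C) \<otimes>\<^bsub>H\<^esub> finprod Z w (carrier C)"
proof -
  interpret Z: comm_group Z by (rule Zc)
  have "finprod Z (\<lambda>x\<in>carrier C. z x \<otimes>\<^bsub>H\<^esub> w x) (carrier C) = finprod Z (\<lambda>x. z x \<otimes>\<^bsub>Z\<^esub> w x) (carrier C)"
    using assms H.center_mult by (intro Z.finprod_cong') (auto simp: carrier_Z mult_Z)
  also have "\<dots> = finprod Z z (carrier C) \<otimes>\<^bsub>H\<^esub> finprod Z w (carrier C)"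
    using assms by (subst Z.finprod_multf) (auto simp: carrier_Z mult_Z)
  finally show ?thesis .
qed

lemma prod_closed: "z \<in> carrier C \<rightarrow> center H \<Longrightarrow> finprod Z z (carrier C) \<in> center H"
proof -
  interpret Z: comm_group Z by (rule Zc)
  show "z \<in> carrier C \<rightarrow> center H \<Longrightarrow> finprod Z z (carrier C) \<in> center H"
    using Z.finprod_closed[of z "carrier C"] by (simp add: carrier_Z)
qed

lemma delta_mem: "a \<in> center H \<Longrightarrow> delta a \<in> carrier C \<rightarrow>\<^sub>E center H"
  using H.center_one by (auto simp: delta_def)

lemma delta_prod: assumes a: "a \<in> center H" shows "finprod Z (delta a) (carrier C) = a"
proof -
  interpret Z: comm_group Z by (rule Zc)
  have "finprod Z (delta a) (carrier C) = finprod Z (\<lambda>j. if \<one>\<^bsub>C\<^esub> = j then (\<lambda>_. a) j else \<one>\<^bsub>Z\<^esub>) (carrier C)"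
    using a H.center_one by (intro Z.finprod_cong') (auto simp: carrier_Z one_Z delta_def)
  also have "\<dots> = a"
    using a finC by (intro Z.finprod_singleton) (auto simp: carrier_Z)
  finally show ?thesis .
qed

lemma coset_eq: assumes z: "z \<in> carrier C \<rightarrow>\<^sub>E center H" and z': "z' \<in> carrier C \<rightarrow>\<^sub>E center H"
  and p: "finprod Z z (carrier C) = finprod Z z' (carrier C)"
  shows "F #>\<^bsub>W\<^esub> (z, \<one>\<^bsub>C\<^esub>) = F #>\<^bsub>W\<^esub> (z', \<one>\<^bsub>C\<^esub>)"
proof -
  interpret W: group W by (rule W_group)
  define w where "w = (\<lambda>x\<in>carrier C. z x \<otimes>\<^bsub>H\<^esub> inv\<^bsub>H\<^esub> (z' x))"
  have w: "w \<in> carrier C \<rightarrow>\<^sub>E center H" using z z' H.center_mult H.center_inv by (auto simp: w_def intro!: H.center_mult H.center_inv)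
  have zH: "z x \<in> carrier H" "z' x \<in> carrier H" if "x \<in> carrier C" for x
    using that z z' H.center_sub by auto
  have wz: "(\<lambda>x\<in>carrier C. w x \<otimes>\<^bsub>H\<^esub> z' x) = z"
  proof
    fix x show "(\<lambda>x\<in>carrier C. w x \<otimes>\<^bsub>H\<^esub> z' x) x = z x"
    proof (cases "x \<in> carrier C")
      case True
      then show ?thesis using zH[OF True] by (simp add: w_def H.m_assoc)
    next
      case False
      then show ?thesis using z by auto
    qed
  qed
  have wP: "w \<in> carrier C \<rightarrow> center H" and z'P: "z' \<in> carrier C \<rightarrow> center H" using w z' by (auto simp: PiE_def)
  have "finprod Z w (carrier C) \<otimes>\<^bsub>H\<^esub> finprod Z z' (carrier C) = finprod Z z' (carrier C)"
    using prod_mult[OF wP z'P] wz p by simp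
  moreover have "finprod Z w (carrier C) \<in> carrier H" "finprod Z z' (carrier C) \<in> carrier H"
    using prod_closed[OF wP] prod_closed[OF z'P] H.center_sub by auto
  ultimately have pw: "finprod Z w (carrier C) = \<one>\<^bsub>H\<^esub>"
    using H.r_cancel_one by blast
  have wF: "(w, \<one>\<^bsub>C\<^esub>) \<in> F" using w pw by (simp add: F_mem)
  have prod: "(w, \<one>\<^bsub>C\<^esub>) \<otimes>\<^bsub>W\<^esub> (z', \<one>\<^bsub>C\<^esub>) = (z, \<one>\<^bsub>C\<^esub>)"
  proof -
    have "(\<lambda>x\<in>carrier C. w x \<otimes>\<^bsub>H\<^esub> z' (x \<otimes>\<^bsub>C\<^esub> \<one>\<^bsub>C\<^esub>)) = (\<lambda>x\<in>carrier C. w x \<otimes>\<^bsub>H\<^esub> z' x)"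
      by (auto simp: restrict_def fun_eq_iff)
    thus ?thesis using wz by (simp add: mult_W)
  qed
  have z'W: "(z', \<one>\<^bsub>C\<^esub>) \<in> carrier W" and wW: "(w, \<one>\<^bsub>C\<^esub>) \<in> carrier W"
    using z' w H.center_sub by (auto simp: carrier_W PiE_def Pi_def)
  have "F #>\<^bsub>W\<^esub> (z, \<one>\<^bsub>C\<^esub>) = (F #>\<^bsub>W\<^esub> (w, \<one>\<^bsub>C\<^esub>)) #>\<^bsub>W\<^esub> (z', \<one>\<^bsub>C\<^esub>)"
    using W.coset_mult_assoc[OF F_sub wW z'W] prod by simp
  also have "\<dots> = F #>\<^bsub>W\<^esub> (z', \<one>\<^bsub>C\<^esub>)"
    using subgroup.rcos_const[OF F_subgroup W_group wF] by simp
  finally show ?thesis .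
qed


abbreviation "JJ \<equiv> W Mod F"

lemma J_group: "group JJ"
  using F_normal by (rule normal.factorgroup_is_group)

lemma carrier_J: "carrier JJ = (\<lambda>x. F #>\<^bsub>W\<^esub> x) ` carrier W"
  by (rule carrier_FactGroup)

lemma mult_J: "monoid.mult JJ P Q = set_mult W P Q" by simp

lemma rcos_sum: "u \<in> carrier W \<Longrightarrow> v \<in> carrier W \<Longrightarrow> (F #>\<^bsub>W\<^esub> u) <#>\<^bsub>W\<^esub> (F #>\<^bsub>W\<^esub> v) = F #>\<^bsub>W\<^esub> (u \<otimes>\<^bsub>W\<^esub> v)"
  using F_normal by (rule normal.rcos_sum)

lemma deltaW: "a \<in> center H \<Longrightarrow> (delta a, \<one>\<^bsub>C\<^esub>) \<in> carrier W"
  using delta_mem[of a] H.center_sub by (auto simp: carrier_W PiE_def Pi_def)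

lemma phi_carrier: "a \<in> center H \<Longrightarrow> phi a \<in> carrier JJ"
  unfolding carrier_J phi_def using deltaW by blast

lemma delta_mult: "a \<in> center H \<Longrightarrow> b \<in> center H \<Longrightarrow>
   (delta a, \<one>\<^bsub>C\<^esub>) \<otimes>\<^bsub>W\<^esub> (delta b, \<one>\<^bsub>C\<^esub>) = (delta (a \<otimes>\<^bsub>H\<^esub> b), \<one>\<^bsub>C\<^esub>)"
  using H.center_sub by (auto simp: delta_def mult_W fun_eq_iff)

lemma phi_mult: "a \<in> center H \<Longrightarrow> b \<in> center H \<Longrightarrow> phi (a \<otimes>\<^bsub>H\<^esub> b) = phi a \<otimes>\<^bsub>JJ\<^esub> phi b"
  unfolding mult_J phi_def using rcos_sum[OF deltaW deltaW] delta_mult by simp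

lemma W_comm_Z: assumes g: "g \<in> carrier C \<rightarrow>\<^sub>E carrier H" and d: "d \<in> carrier C"
  and z: "z \<in> carrier C \<rightarrow>\<^sub>E center H"
  shows "(g, d) \<otimes>\<^bsub>W\<^esub> (z, \<one>\<^bsub>C\<^esub>) = ((\<lambda>x\<in>carrier C. z (x \<otimes>\<^bsub>C\<^esub> d)), \<one>\<^bsub>C\<^esub>) \<otimes>\<^bsub>W\<^esub> (g, d)"
proof -
  have "g x \<otimes>\<^bsub>H\<^esub> z (x \<otimes>\<^bsub>C\<^esub> d) = z (x \<otimes>\<^bsub>C\<^esub> d) \<otimes>\<^bsub>H\<^esub> g x" if "x \<in> carrier C" for x
  proof -
    have "z (x \<otimes>\<^bsub>C\<^esub> d) \<in> center H" "g x \<in> carrier H" using that g z d by auto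
    thus ?thesis using H.center_comm[of "z (x \<otimes>\<^bsub>C\<^esub> d)" "g x"] by simp
  qed
  thus ?thesis using d by (auto simp: mult_W fun_eq_iff)
qed

lemma phi_center: assumes a: "a \<in> center H" shows "phi a \<in> center JJ"
  unfolding center_def
proof (intro CollectI conjI ballI)
  show "phi a \<in> carrier JJ" using a by (rule phi_carrier)
  fix Q assume "Q \<in> carrier JJ"
  then obtain y where y: "y \<in> carrier W" and Qy: "Q = F #>\<^bsub>W\<^esub> y" unfolding carrier_J by blast
  obtain g d where ygd: "y = (g, d)" by fastforce
  have g: "g \<in> carrier C \<rightarrow>\<^sub>E carrier H" and d: "d \<in> carrier C" using y ygd carrier_W by auto
  define sh where "sh = (\<lambda>x\<in>carrier C. delta a (x \<otimes>\<^bsub>C\<^esub> d))"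
  have dm: "delta a \<in> carrier C \<rightarrow>\<^sub>E center H" using a by (rule delta_mem)
  have sh: "sh \<in> carrier C \<rightarrow>\<^sub>E center H" using dm d by (auto simp: sh_def)
  have shW: "(sh, \<one>\<^bsub>C\<^esub>) \<in> carrier W" using sh H.center_sub by (auto simp: carrier_W PiE_def Pi_def)
  interpret Z: comm_group Z by (rule Zc)
  have "finprod Z sh (carrier C) = finprod Z (\<lambda>x. delta a (x \<otimes>\<^bsub>C\<^esub> d)) (carrier C)"
    using dm d by (intro Z.finprod_cong') (auto simp: carrier_Z sh_def)
  also have "\<dots> = finprod Z (delta a) (carrier C)" using prod_shift[of "delta a" d] dm d by auto
  finally have shc: "F #>\<^bsub>W\<^esub> (sh, \<one>\<^bsub>C\<^esub>) = phi a" unfolding phi_def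
    using coset_eq[OF sh dm] by simp
  have "Q \<otimes>\<^bsub>JJ\<^esub> phi a = F #>\<^bsub>W\<^esub> ((g, d) \<otimes>\<^bsub>W\<^esub> (delta a, \<one>\<^bsub>C\<^esub>))"
    unfolding mult_J phi_def Qy ygd using rcos_sum[OF _ deltaW[OF a]] y ygd by simp
  also have "\<dots> = F #>\<^bsub>W\<^esub> ((sh, \<one>\<^bsub>C\<^esub>) \<otimes>\<^bsub>W\<^esub> (g, d))"
    using W_comm_Z[OF g d dm] by (simp add: sh_def)
  also have "\<dots> = phi a \<otimes>\<^bsub>JJ\<^esub> Q"
    unfolding mult_J Qy ygd using rcos_sum[OF shW] y ygd shc by simp
  finally show "phi a \<otimes>\<^bsub>JJ\<^esub> Q = Q \<otimes>\<^bsub>JJ\<^esub> phi a" by simp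
qed

end


context wr begin

lemma coset_mem: assumes "v \<in> F #>\<^bsub>W\<^esub> u"
  shows "\<exists>z. z \<in> carrier C \<rightarrow>\<^sub>E center H \<and> finprod Z z (carrier C) = \<one>\<^bsub>H\<^esub> \<and> v = (z, \<one>\<^bsub>C\<^esub>) \<otimes>\<^bsub>W\<^esub> u"
  using assms unfolding r_coset_def wreath_F_def by auto

lemma phi_inj: assumes a: "a \<in> center H" and b: "b \<in> center H" and e: "phi a = phi b"
  shows "a = b"
proof -
  interpret W: group W by (rule W_group)
  have "(delta a, \<one>\<^bsub>C\<^esub>) \<in> F #>\<^bsub>W\<^esub> (delta b, \<one>\<^bsub>C\<^esub>)"
    using W.rcos_self[OF deltaW[OF a] F_subgroup] e by (simp add: phi_def)
  then obtain z where z: "z \<in> carrier C \<rightarrow>\<^sub>E center H" and pz: "finprod Z z (carrier C) = \<one>\<^bsub>H\<^esub>"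
    and eq: "(delta a, \<one>\<^bsub>C\<^esub>) = (z, \<one>\<^bsub>C\<^esub>) \<otimes>\<^bsub>W\<^esub> (delta b, \<one>\<^bsub>C\<^esub>)" using coset_mem by blast
  have "delta a = (\<lambda>x\<in>carrier C. z x \<otimes>\<^bsub>H\<^esub> delta b (x \<otimes>\<^bsub>C\<^esub> \<one>\<^bsub>C\<^esub>))" using eq by (simp add: mult_W)
  also have "\<dots> = (\<lambda>x\<in>carrier C. z x \<otimes>\<^bsub>H\<^esub> delta b x)" by (auto simp: restrict_def fun_eq_iff)
  finally have da: "delta a = (\<lambda>x\<in>carrier C. z x \<otimes>\<^bsub>H\<^esub> delta b x)" .
  have zP: "z \<in> carrier C \<rightarrow> center H" and dP: "delta b \<in> carrier C \<rightarrow> center H"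
    using z delta_mem[OF b] by (auto simp: PiE_def)
  have "a = finprod Z (delta a) (carrier C)" using delta_prod[OF a] by simp
  also have "\<dots> = \<one>\<^bsub>H\<^esub> \<otimes>\<^bsub>H\<^esub> b" using prod_mult[OF zP dP] da pz delta_prod[OF b] by simp
  also have "\<dots> = b" using b H.center_sub by auto
  finally show ?thesis .
qed

lemma noncomm: assumes "\<not> comm_group H" shows "\<exists>h\<in>carrier H. h \<notin> center H"
proof (rule ccontr)
  assume "\<not> ?thesis"
  hence "\<forall>h\<in>carrier H. h \<in> center H" by blast
  hence "comm_group H" by (intro H.group_comm_groupI) (auto simp: center_def)
  thus False using assms by simp
qed

lemma center_J_phi: assumes nc: "\<not> comm_group H" and Xc: "P \<in> center JJ"
  shows "\<exists>a\<in>center H. P = phi a"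
proof -
  interpret W: group W by (rule W_group)
  have "P \<in> carrier JJ" using Xc unfolding center_def by auto
  then obtain u where u: "u \<in> carrier W" and Pu: "P = F #>\<^bsub>W\<^esub> u" unfolding carrier_J by blast
  obtain f c where ufc: "u = (f, c)" by fastforce
  have f: "f \<in> carrier C \<rightarrow>\<^sub>E carrier H" and c: "c \<in> carrier C" using u ufc carrier_W by auto
  have key: "\<exists>z. z \<in> carrier C \<rightarrow>\<^sub>E center H \<and> finprod Z z (carrier C) = \<one>\<^bsub>H\<^esub> \<and>
      (\<forall>x\<in>carrier C. f x \<otimes>\<^bsub>H\<^esub> g (x \<otimes>\<^bsub>C\<^esub> c) = z x \<otimes>\<^bsub>H\<^esub> (g x \<otimes>\<^bsub>H\<^esub> f (x \<otimes>\<^bsub>C\<^esub> d)))"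
    if g: "g \<in> carrier C \<rightarrow>\<^sub>E carrier H" and d: "d \<in> carrier C" for g d
  proof -
    have gW: "(g, d) \<in> carrier W" using g d by (simp add: carrier_W)
    have "F #>\<^bsub>W\<^esub> (g, d) \<in> carrier JJ" unfolding carrier_J using gW by blast
    hence "P \<otimes>\<^bsub>JJ\<^esub> (F #>\<^bsub>W\<^esub> (g, d)) = (F #>\<^bsub>W\<^esub> (g, d)) \<otimes>\<^bsub>JJ\<^esub> P"
      using Xc unfolding center_def by blast
    hence "F #>\<^bsub>W\<^esub> (u \<otimes>\<^bsub>W\<^esub> (g, d)) = F #>\<^bsub>W\<^esub> ((g, d) \<otimes>\<^bsub>W\<^esub> u)"
      unfolding mult_J Pu using rcos_sum[OF u gW] rcos_sum[OF gW u] by simp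
    moreover have "u \<otimes>\<^bsub>W\<^esub> (g, d) \<in> F #>\<^bsub>W\<^esub> (u \<otimes>\<^bsub>W\<^esub> (g, d))"
      using W.rcos_self[OF _ F_subgroup] u gW by simp
    ultimately have "u \<otimes>\<^bsub>W\<^esub> (g, d) \<in> F #>\<^bsub>W\<^esub> ((g, d) \<otimes>\<^bsub>W\<^esub> u)" by simp
    then obtain z where z: "z \<in> carrier C \<rightarrow>\<^sub>E center H" and pz: "finprod Z z (carrier C) = \<one>\<^bsub>H\<^esub>"
      and eq: "u \<otimes>\<^bsub>W\<^esub> (g, d) = (z, \<one>\<^bsub>C\<^esub>) \<otimes>\<^bsub>W\<^esub> ((g, d) \<otimes>\<^bsub>W\<^esub> u)" using coset_mem by blast
    have "\<forall>x\<in>carrier C. f x \<otimes>\<^bsub>H\<^esub> g (x \<otimes>\<^bsub>C\<^esub> c) = z x \<otimes>\<^bsub>H\<^esub> (g x \<otimes>\<^bsub>H\<^esub> f (x \<otimes>\<^bsub>C\<^esub> d))"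
    proof
      fix x assume x: "x \<in> carrier C"
      have "fst (u \<otimes>\<^bsub>W\<^esub> (g, d)) x = fst ((z, \<one>\<^bsub>C\<^esub>) \<otimes>\<^bsub>W\<^esub> ((g, d) \<otimes>\<^bsub>W\<^esub> u)) x" using eq by simp
      thus "f x \<otimes>\<^bsub>H\<^esub> g (x \<otimes>\<^bsub>C\<^esub> c) = z x \<otimes>\<^bsub>H\<^esub> (g x \<otimes>\<^bsub>H\<^esub> f (x \<otimes>\<^bsub>C\<^esub> d))"
        using x d by (simp add: ufc mult_W)
    qed
    thus ?thesis using z pz by blast
  qed
  have c1: "c = \<one>\<^bsub>C\<^esub>"
  proof (rule ccontr)
    assume cn: "c \<noteq> \<one>\<^bsub>C\<^esub>"
    obtain h where h: "h \<in> carrier H" "h \<notin> center H" using noncomm[OF nc] by blast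
    define g where "g = (\<lambda>x\<in>carrier C. if x = c then h else \<one>\<^bsub>H\<^esub>)"
    have g: "g \<in> carrier C \<rightarrow>\<^sub>E carrier H" using h by (auto simp: g_def)
    obtain z where z: "z \<in> carrier C \<rightarrow>\<^sub>E center H"
      and eqs: "\<forall>x\<in>carrier C. f x \<otimes>\<^bsub>H\<^esub> g (x \<otimes>\<^bsub>C\<^esub> c) = z x \<otimes>\<^bsub>H\<^esub> (g x \<otimes>\<^bsub>H\<^esub> f (x \<otimes>\<^bsub>C\<^esub> \<one>\<^bsub>C\<^esub>))"
      using key[OF g C.one_closed] by blast
    have z1: "z \<one>\<^bsub>C\<^esub> \<in> center H" using z by auto
    have f1: "f \<one>\<^bsub>C\<^esub> \<in> carrier H" using f by auto
    have "f \<one>\<^bsub>C\<^esub> \<otimes>\<^bsub>H\<^esub> h = z \<one>\<^bsub>C\<^esub> \<otimes>\<^bsub>H\<^esub> f \<one>\<^bsub>C\<^esub>"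
      using bspec[OF eqs C.one_closed] c cn f1 by (simp add: g_def)
    also have "\<dots> = f \<one>\<^bsub>C\<^esub> \<otimes>\<^bsub>H\<^esub> z \<one>\<^bsub>C\<^esub>" using H.center_comm[OF z1 f1] .
    finally have "h = z \<one>\<^bsub>C\<^esub>" using h f1 z1 H.center_sub by auto
    thus False using h z1 by simp
  qed
  have fc: "f y \<in> center H" if y: "y \<in> carrier C" for y
    unfolding center_def
  proof (intro CollectI conjI ballI)
    show fy: "f y \<in> carrier H" using f y by auto
    fix k assume k: "k \<in> carrier H"
    define g where "g = (\<lambda>x\<in>carrier C. if x = y then k else \<one>\<^bsub>H\<^esub>)"
    have g: "g \<in> carrier C \<rightarrow>\<^sub>E carrier H" using k by (auto simp: g_def)
    obtain z where z: "z \<in> carrier C \<rightarrow>\<^sub>E center H" and pz: "finprod Z z (carrier C) = \<one>\<^bsub>H\<^esub>"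
      and eqs: "\<forall>x\<in>carrier C. f x \<otimes>\<^bsub>H\<^esub> g (x \<otimes>\<^bsub>C\<^esub> c) = z x \<otimes>\<^bsub>H\<^esub> (g x \<otimes>\<^bsub>H\<^esub> f (x \<otimes>\<^bsub>C\<^esub> \<one>\<^bsub>C\<^esub>))"
      using key[OF g C.one_closed] by blast
    have eqx: "f x \<otimes>\<^bsub>H\<^esub> g x = z x \<otimes>\<^bsub>H\<^esub> (g x \<otimes>\<^bsub>H\<^esub> f x)" if x: "x \<in> carrier C" for x
      using bspec[OF eqs x] x c1 by simp
    have zx: "z x = \<one>\<^bsub>H\<^esub>" if x: "x \<in> carrier C" and xy: "x \<noteq> y" for x
    proof -
      have fx: "f x \<in> carrier H" using f x by auto
      have "f x = z x \<otimes>\<^bsub>H\<^esub> f x" using eqx[OF x] xy x fx by (simp add: g_def)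
      moreover have "z x \<in> carrier H" using z x H.center_sub by auto
      ultimately show ?thesis using fx H.r_cancel_one' by blast
    qed
    interpret Z: comm_group Z by (rule Zc)
    have "finprod Z z (carrier C) = finprod Z (\<lambda>j. if y = j then z j else \<one>\<^bsub>Z\<^esub>) (carrier C)"
      using z zx by (intro Z.finprod_cong') (auto simp: carrier_Z one_Z H.center_one)
    also have "\<dots> = z y" using y finC z by (intro Z.finprod_singleton) (auto simp: carrier_Z)
    finally have zy: "z y = \<one>\<^bsub>H\<^esub>" using pz by simp
    show "f y \<otimes>\<^bsub>H\<^esub> k = k \<otimes>\<^bsub>H\<^esub> f y" using eqx[OF y] zy k fy y by (simp add: g_def)
  qed
  have fZ: "f \<in> carrier C \<rightarrow>\<^sub>E center H" using f fc by (auto simp: PiE_def)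
  have fP: "f \<in> carrier C \<rightarrow> center H" using fZ by (auto simp: PiE_def)
  define a where "a = finprod Z f (carrier C)"
  have a: "a \<in> center H" using prod_closed[OF fP] a_def by simp
  have "P = F #>\<^bsub>W\<^esub> (f, \<one>\<^bsub>C\<^esub>)" using Pu ufc c1 by simp
  also have "\<dots> = phi a" unfolding phi_def
    using coset_eq[OF fZ delta_mem[OF a]] delta_prod[OF a] a_def by simp
  finally show ?thesis using a by blast
qed

end


lemma (in group) cyclic_p_min:
  assumes fin: "finite (carrier G)" and p: "Factorial_Ring.prime p" and ord: "order G = p ^ e"
    and a: "a \<in> carrier G" and gen: "carrier G = range (\<lambda>n::int. a [^] n)"
    and nt: "\<exists>x\<in>carrier G. x \<noteq> \<one>"
  shows "\<exists>b\<in>carrier G. b \<noteq> \<one> \<and> (\<forall>x\<in>carrier G. x \<noteq> \<one> \<longrightarrow> (\<exists>k::int. b = x [^] k))"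
proof -
  define m where "m = ord a"
  have "m dvd p ^ e" unfolding m_def using ord_dvd_group_order[OF a] ord by simp
  then obtain f where mf: "m = p ^ f" using divides_primepow_nat[OF p] by blast
  have m1: "m \<noteq> 1"
  proof
    assume "m = 1"
    hence "a [^] (1::nat) = \<one>" unfolding m_def by (subst pow_eq_id[OF a]) simp
    hence a1: "a = \<one>" using a by simp
    have "\<forall>x\<in>carrier G. x = \<one>" using gen a1 by auto
    thus False using nt by blast
  qed
  hence f0: "f \<ge> 1" using mf by (cases f) auto
  have pp: "p > 1" using p prime_gt_1_nat by blast
  define b where "b = a [^] (int (p ^ (f - 1)))"
  have bG: "b \<in> carrier G" using a b_def by simp
  have b1: "b \<noteq> \<one>"
  proof
    assume "b = \<one>"
    hence "int m dvd int (p ^ (f - 1))" using int_pow_eq_id[OF a] b_def m_def by simp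
    hence "p ^ f dvd p ^ (f - 1)" using mf by (simp only: of_nat_dvd_iff)
    moreover have "p ^ (f - 1) < p ^ f" using pp f0 by (simp add: power_strict_increasing)
    moreover have "p ^ (f - 1) > 0" using pp by simp
    ultimately show False by (simp add: nat_dvd_not_less)
  qed
  have powq: "a [^] i = a [^] i'" if "i = i' + int m * c" for i i' c :: int
  proof -
    have "a [^] (int m * c) = (a [^] (int m)) [^] c" using int_pow_pow[OF a] by simp
    also have "a [^] (int m) = \<one>" using int_pow_eq_id[OF a] m_def by simp
    finally have "a [^] (int m * c) = \<one>" by simp
    thus ?thesis using that int_pow_mult[OF a, of i' "int m * c"] a by simp
  qed
  have "\<exists>k::int. b = x [^] k" if x: "x \<in> carrier G" and x1: "x \<noteq> \<one>" for x
  proof -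
    obtain t where xt: "x = a [^] (t::int)" using x gen by auto
    obtain u v where uv: "u * t + v * int m = gcd t (int m)" using bezout_int by blast
    define g where "g = nat (gcd t (int m))"
    have gi: "int g = gcd t (int m)" unfolding g_def by simp
    have "g dvd m" using gi by (metis gcd_dvd2 of_nat_dvd_iff)
    then obtain j where gj: "g = p ^ j" and jf: "j \<le> f" using divides_primepow_nat[OF p] mf
      by (metis dvd_power_iff_le not_less_eq_eq pp)
    have "j \<noteq> f"
    proof
      assume "j = f"
      hence "int m dvd t" using gi gj mf by (metis gcd_dvd1)
      hence "x = \<one>" using xt int_pow_eq_id[OF a] m_def by simp
      thus False using x1 by simp
    qed
    hence jf1: "j \<le> f - 1" using jf by simp
    define k where "k = u * int (p ^ (f - 1 - j))"
    have "t * k = int (p ^ (f - 1)) + int m * (- v * int (p ^ (f - 1 - j)))"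
    proof -
      have "t * k = (u * t) * int (p ^ (f - 1 - j))" unfolding k_def by simp
      also have "\<dots> = (int g - v * int m) * int (p ^ (f - 1 - j))" using uv gi by simp
      also have "int g * int (p ^ (f - 1 - j)) = int (p ^ (f - 1))"
      proof -
        have "j + (f - 1 - j) = f - 1" using jf1 by simp
        hence "p ^ j * p ^ (f - 1 - j) = p ^ (f - 1)" by (metis power_add)
        thus ?thesis using gj by (metis of_nat_mult)
      qed
      hence "(int g - v * int m) * int (p ^ (f - 1 - j)) = int (p ^ (f - 1)) + int m * (- v * int (p ^ (f - 1 - j)))"
        by (simp add: algebra_simps)
      finally show ?thesis .
    qed
    hence "a [^] (t * k) = b" unfolding b_def by (rule powq)
    moreover have "x [^] k = a [^] (t * k)" using xt int_pow_pow[OF a] by simp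
    ultimately show ?thesis by metis
  qed
  thus ?thesis using bG b1 by blast
qed



lemma (in group) center_subgroup: "subgroup (center G) G"
proof (rule subgroupI)
  show "center G \<noteq> {}" using center_one by blast
qed (auto simp: center_sub center_inv center_mult)

context wr begin

lemma phi_one: "phi \<one>\<^bsub>H\<^esub> = \<one>\<^bsub>JJ\<^esub>"
proof -
  interpret W: group W by (rule W_group)
  have "(delta \<one>\<^bsub>H\<^esub>, \<one>\<^bsub>C\<^esub>) = \<one>\<^bsub>W\<^esub>" by (auto simp: delta_def one_W)
  thus ?thesis unfolding phi_def using W.coset_mult_one[OF F_sub] by simp
qed

lemma phi_iso: assumes nc: "\<not> comm_group H" shows "phi \<in> iso Z (center_group JJ)"
  unfolding iso_def
proof (intro CollectI conjI)
  show "phi \<in> hom Z (center_group JJ)"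
    unfolding hom_def using phi_center phi_mult H.center_mult
    by (auto simp: center_group_def)
  show "bij_betw phi (carrier Z) (carrier (center_group JJ))"
    unfolding bij_betw_def carrier_Z
  proof
    show "inj_on phi (center H)" using phi_inj by (auto simp: inj_on_def)
    show "phi ` center H = carrier (center_group JJ)"
      using phi_center center_J_phi[OF nc] by (auto simp: center_group_def)
  qed
qed

lemma order_W: assumes "finite (carrier H)"
  shows "order W = card (carrier H) ^ card (carrier C) * card (carrier C)"
  unfolding order_def carrier_W using finC
  by (simp add: card_cartesian_product card_PiE)

lemma order_J_dvd: "order JJ dvd order W"
proof -
  interpret W: group W by (rule W_group)
  have "card (rcosets\<^bsub>W\<^esub> F) * card F = order W" by (rule W.lagrange[OF F_subgroup])
  moreover have "order JJ = card (rcosets\<^bsub>W\<^esub> F)" by (simp add: order_def FactGroup_def)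
  ultimately show ?thesis by (metis dvd_triv_left)
qed

end


theorem theorem4p2:
  fixes H :: "('a, 'b) monoid_scheme" and C :: "('c, 'd) monoid_scheme" and p n :: nat
  assumes "p_group p H" and "\<not> comm_group H"
    and "cyclic_group (center_group H)"
    and "p_group p C" and "order C = n"
  shows "wreath_F H C \<lhd> wreath H C
         \<and> center_group (wreath H C Mod wreath_F H C) \<cong> center_group H
         \<and> monolithic (wreath H C Mod wreath_F H C)"
proof -
  have gH: "group H" and p: "Factorial_Ring.prime p" and finH: "finite (carrier H)"
    and gC: "group C" and finC: "finite (carrier C)"
    using assms(1,4) unfolding p_group_def by auto
  obtain k1 where k1: "order H = p ^ k1" using assms(1) unfolding p_group_def by auto
  obtain k2 where k2: "order C = p ^ k2" using assms(4) unfolding p_group_def by auto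
  interpret w: wr H C using gH gC finC by (simp add: wr_def wr_axioms_def)
  have nc: "\<not> comm_group H" by (rule assms(2))
  define JJ where "JJ = wreath H C Mod wreath_F H C"
  define K where "K = center_group JJ"
  define Z where "Z = center_group H"
  have gZ: "group Z" unfolding Z_def using w.Zc comm_group.axioms(2) by blast
  have iso1: "Z \<cong> K" unfolding is_iso_def Z_def K_def JJ_def using w.phi_iso[OF nc] by blast
  have iso2: "K \<cong> Z" using group.iso_sym[OF gZ iso1] .
  have gJ: "group JJ" unfolding JJ_def by (rule w.J_group)
  interpret J: group JJ by (rule gJ)
  have gK: "group K" unfolding K_def using J.center_group_comm comm_group.axioms(2) by blast
  have "order (wreath H C) = (p ^ k1) ^ (p ^ k2) * p ^ k2"
    using w.order_W[OF finH] k1 k2 by (simp add: order_def)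
  also have "\<dots> = p ^ (k1 * p ^ k2 + k2)" by (simp add: power_mult power_add)
  finally have "order JJ dvd p ^ (k1 * p ^ k2 + k2)" using w.order_J_dvd unfolding JJ_def by simp
  then obtain i where oJ: "order JJ = p ^ i" using divides_primepow_nat[OF p] by blast
  have pp: "p > 0" using p prime_gt_0_nat by blast
  have finJ: "finite (carrier JJ)"
  proof (rule ccontr)
    assume "infinite (carrier JJ)"
    hence "order JJ = 0" by (simp add: order_def)
    thus False using oJ pp by simp
  qed

  have "carrier H \<noteq> {\<one>\<^bsub>H\<^esub>}"
  proof
    assume "carrier H = {\<one>\<^bsub>H\<^esub>}"
    hence "comm_group H" by (intro w.H.group_comm_groupI) auto
    thus False using nc by simp
  qed
  then obtain s where s: "s \<in> center H" "s \<noteq> \<one>\<^bsub>H\<^esub>"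
    using w.H.pgroup_normal_center[OF finH p k1 w.H.normal_self] by blast
  have ps: "w.phi s \<in> center JJ" "w.phi s \<noteq> \<one>\<^bsub>JJ\<^esub>"
  proof -
    show "w.phi s \<in> center JJ" unfolding JJ_def using w.phi_center[OF s(1)] .
    show "w.phi s \<noteq> \<one>\<^bsub>JJ\<^esub>"
    proof
      assume "w.phi s = \<one>\<^bsub>JJ\<^esub>"
      hence "w.phi s = w.phi \<one>\<^bsub>H\<^esub>" using w.phi_one unfolding JJ_def by simp
      hence "s = \<one>\<^bsub>H\<^esub>" using w.phi_inj[OF s(1) w.H.center_one] by simp
      thus False using s(2) by simp
    qed
  qed
  have cK: "cyclic_group K" using isomorphic_group_cyclicity[OF iso2 gK gZ] assms(3) Z_def by simp
  then obtain a where a: "a \<in> carrier K" and gen: "carrier K = range (\<lambda>n::int. a [^]\<^bsub>K\<^esub> n)"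
    using group.cyclic_group[OF gK] by blast
  have cKc: "carrier K = center JJ" and oneK: "\<one>\<^bsub>K\<^esub> = \<one>\<^bsub>JJ\<^esub>" by (simp_all add: K_def center_group_def)
  have "card (center JJ) dvd p ^ i" using J.lagrange[OF J.center_subgroup] oJ by (metis dvd_triv_right)
  then obtain e where oK: "order K = p ^ e" using divides_primepow_nat[OF p] cKc by (auto simp: order_def)
  have finK: "finite (carrier K)" using finJ cKc J.center_sub finite_subset by metis
  obtain b where b: "b \<in> carrier K" "b \<noteq> \<one>\<^bsub>K\<^esub>"
    and bpow: "\<forall>x\<in>carrier K. x \<noteq> \<one>\<^bsub>K\<^esub> \<longrightarrow> (\<exists>k::int. b = x [^]\<^bsub>K\<^esub> k)"
    using group.cyclic_p_min[OF gK finK p oK a gen] ps cKc oneK by blast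
  have bin: "b \<in> N" if N: "N \<lhd> JJ" "N \<noteq> {\<one>\<^bsub>JJ\<^esub>}" for N
  proof -
    obtain x where x: "x \<in> N" "x \<in> center JJ" "x \<noteq> \<one>\<^bsub>JJ\<^esub>"
      using J.pgroup_normal_center[OF finJ p oJ N] by blast
    then obtain k :: int where bk: "b = x [^]\<^bsub>K\<^esub> k" using bpow cKc oneK by auto
    have "x [^]\<^bsub>K\<^esub> k = x [^]\<^bsub>JJ\<^esub> k"
      using J.int_pow_consistent[OF J.center_subgroup x(2)] by (simp add: K_def center_group_def)
    moreover have "x [^]\<^bsub>JJ\<^esub> k \<in> N"
      using J.subgroup_int_pow_closed[OF normal_imp_subgroup[OF N(1)] x(1)] .
    ultimately show ?thesis using bk by simp
  qed
  have "monolithic JJ"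
    unfolding monolithic_def
  proof
    assume eq: "\<Inter> {N. N \<lhd> JJ \<and> N \<noteq> {\<one>\<^bsub>JJ\<^esub>}} = {\<one>\<^bsub>JJ\<^esub>}"
    have "b \<in> \<Inter> {N. N \<lhd> JJ \<and> N \<noteq> {\<one>\<^bsub>JJ\<^esub>}}" using bin by blast
    thus False using eq b oneK by simp
  qed
  thus ?thesis using w.F_normal iso2 unfolding JJ_def K_def Z_def by simp
qed


end
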